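(* Let $H$ be a real Hilbert space of infinite dimension and let $Q$ be a complete $\sigma$-finite probability measure on $H$ such that $Q(A)=0$ for every finite dimensional affine subspace $A$ of $H$. Then for every integer $k \geq 1$ and every finite dimensional affine subspace $A$ of $H^k$, we have $Q^{\otimes k}(A)=0$.
   Context: $Q^{\otimes k}$ denotes the $k$-fold product measure of $Q$ on $H^k$. An affine subspace of a vector space is a set of the form $a + V$ with $V$ a vector subspace; it is finite dimensional if $V$ is. *)

theory Defs
  imports "HOL-Analysis.Analysis" "HOL-Probability.Probability"
begin

definition fin_dim_affine :: "'a::real_vector set \<Rightarrow> bool" where
  "fin_dim_affine A \<longleftrightarrow>
     (\<exists>a V B. subspace V \<and> finite B \<and> V \<subseteq> span B \<and> A = (\<lambda>v. a + v) ` V)"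

(* H^k realised as the carrier of the product measure: extensional functions on {..<k},
   with componentwise vector operations. *)
definition kspace :: "nat \<Rightarrow> (nat \<Rightarrow> 'a) set" where
  "kspace k = PiE {..<k} (\<lambda>_. UNIV)"

definition kadd :: "nat \<Rightarrow> (nat \<Rightarrow> 'a::real_vector) \<Rightarrow> (nat \<Rightarrow> 'a) \<Rightarrow> (nat \<Rightarrow> 'a)" where
  "kadd k f g = (\<lambda>i\<in>{..<k}. f i + g i)"

definition kscale :: "nat \<Rightarrow> real \<Rightarrow> (nat \<Rightarrow> 'a::real_vector) \<Rightarrow> (nat \<Rightarrow> 'a)" where
  "kscale k c f = (\<lambda>i\<in>{..<k}. c *\<^sub>R f i)"

definition kzero :: "nat \<Rightarrow> (nat \<Rightarrow> 'a::real_vector)" where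
  "kzero k = (\<lambda>i\<in>{..<k}. 0)"

definition ksubspace :: "nat \<Rightarrow> (nat \<Rightarrow> 'a::real_vector) set \<Rightarrow> bool" where
  "ksubspace k V \<longleftrightarrow> V \<subseteq> kspace k \<and> kzero k \<in> V \<and>
     (\<forall>x\<in>V. \<forall>y\<in>V. kadd k x y \<in> V) \<and> (\<forall>c. \<forall>x\<in>V. kscale k c x \<in> V)"

definition kfin_dim :: "nat \<Rightarrow> (nat \<Rightarrow> 'a::real_vector) set \<Rightarrow> bool" where
  "kfin_dim k V \<longleftrightarrow> (\<exists>B. finite B \<and> B \<subseteq> kspace k \<and>
      (\<forall>W. ksubspace k W \<and> B \<subseteq> W \<longrightarrow> V \<subseteq> W))"

definition kfin_dim_affine :: "nat \<Rightarrow> (nat \<Rightarrow> 'a::real_vector) set \<Rightarrow> bool" where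
  "kfin_dim_affine k A \<longleftrightarrow>
     (\<exists>a\<in>kspace k. \<exists>V. ksubspace k V \<and> kfin_dim k V \<and> A = kadd k a ` V)"

end

theory Submission
  imports Defs
begin

lemma proj_inner:
  fixes D :: "'a::real_inner set"
  assumes fD: "finite D" and oD: "pairwise orthogonal D" and z: "0 \<notin> D" and e: "e \<in> D"
  shows "e \<bullet> (\<Sum>d\<in>D. (d \<bullet> x / (d \<bullet> d)) *\<^sub>R d) = e \<bullet> x"
proof -
  have "e \<bullet> (\<Sum>d\<in>D. (d \<bullet> x / (d \<bullet> d)) *\<^sub>R d) = (\<Sum>d\<in>D. (d \<bullet> x / (d \<bullet> d)) * (e \<bullet> d))"
    by (simp add: inner_sum_right)
  also have "\<dots> = (\<Sum>d\<in>D. if d = e then e \<bullet> x else 0)"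
  proof (rule sum.cong[OF refl])
    fix d assume d: "d \<in> D"
    show "d \<bullet> x / (d \<bullet> d) * (e \<bullet> d) = (if d = e then e \<bullet> x else 0)"
    proof (cases "d = e")
      case True
      have "e \<bullet> e \<noteq> 0" using z e by auto
      then show ?thesis using True by (simp add: inner_commute[of e x])
    next
      case False
      have "orthogonal e d" using pairwiseD[OF oD e d] False by auto
      then have "e \<bullet> d = 0" unfolding orthogonal_def .
      then show ?thesis using False by simp
    qed
  qed
  also have "\<dots> = e \<bullet> x" using fD e by simp
  finally show ?thesis .
qed

lemma closed_span_finite_inner:
  fixes B :: "'a::real_inner set"
  assumes "finite B"
  shows "closed (span B)"
proof -
  obtain C where C: "finite C" "span C = span B" "pairwise orthogonal C"
    using basis_orthogonal[OF assms] by blast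
  define D where "D = C - {0}"
  have fD: "finite D" using C by (simp add: D_def)
  have spD: "span D = span B"
  proof -
    have "C = D \<or> C = insert 0 D" by (auto simp: D_def)
    then show ?thesis using C(2) by (metis span_insert_0)
  qed
  have oD: "pairwise orthogonal D" using pairwise_subset[OF C(3)] by (simp add: D_def)
  have z: "0 \<notin> D" by (simp add: D_def)
  have nz: "d \<in> D \<Longrightarrow> d \<bullet> d \<noteq> 0" for d using z by auto
  define P where "P x = (\<Sum>d\<in>D. (d \<bullet> x / (d \<bullet> d)) *\<^sub>R d)" for x
  have PS: "P x \<in> span D" for x unfolding P_def by (intro span_sum span_mul span_base)
  have eq: "span D = {x. x - P x = 0}"
  proof (intro set_eqI iffI)
    fix x assume x: "x \<in> span D"
    define y where "y = x - P x"
    have orth: "orthogonal y e" if e: "e \<in> D" for e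
    proof -
      have "e \<bullet> P x = e \<bullet> x" unfolding P_def by (rule proj_inner[OF fD oD z e])
      then have "e \<bullet> y = 0" by (simp add: y_def inner_diff_right)
      then show ?thesis unfolding orthogonal_def by (metis inner_commute)
    qed
    have "y \<in> span D" using x PS[of x] unfolding y_def by (rule span_diff)
    then have "orthogonal y y"
      using orthogonal_to_span[of y D y, OF _ orth] by blast
    then have "y = 0" by (simp add: orthogonal_self)
    then show "x \<in> {x. x - P x = 0}" unfolding mem_Collect_eq y_def[symmetric] .
  next
    fix x assume "x \<in> {x. x - P x = 0}"
    then have "x = P x" by (simp only: mem_Collect_eq right_minus_eq)
    from PS[of x] show "x \<in> span D" by (simp only: \<open>x = P x\<close>[symmetric])
  qed
  have "continuous_on UNIV (\<lambda>x. x - P x)"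
    unfolding P_def using nz by (intro continuous_intros) auto
  then have "closed {x. x - P x = 0}"
    by (rule closed_Collect_eq) (rule continuous_on_const)
  then have "closed (span D)" by (subst eq)
  then show ?thesis by (subst spD[symmetric])
qed

theorem mainTheorem2:
  fixes Q :: "'a::{real_inner, complete_space} measure"
  assumes inf_dim: "\<not> (\<exists>B::'a set. finite B \<and> span B = UNIV)"
    and prob: "prob_space Q"
    and sfin: "sigma_finite_measure Q"
    and compl: "complete_measure Q"
    and space: "space Q = UNIV"
    and borel: "sets borel \<subseteq> sets Q"
    and null: "\<And>A. fin_dim_affine A \<Longrightarrow> emeasure Q A = 0"
  shows "\<forall>k::nat. k \<ge> 1 \<longrightarrow> (\<forall>A. kfin_dim_affine k A \<longrightarrow>
           emeasure (PiM {..<k} (\<lambda>_. Q)) A = 0)"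
proof (intro allI impI)
  fix k :: nat and A :: "(nat \<Rightarrow> 'a) set"
  assume k: "k \<ge> 1" and A: "kfin_dim_affine k A"
  have k0: "0 \<in> {..<k}" using k by auto
  obtain a V where a: "a \<in> kspace k" and V: "ksubspace k V" "kfin_dim k V"
    and AV: "A = kadd k a ` V"
    using A unfolding kfin_dim_affine_def by blast
  obtain B0 where B0: "finite B0" "B0 \<subseteq> kspace k"
    and Bmin: "\<And>W. ksubspace k W \<Longrightarrow> B0 \<subseteq> W \<Longrightarrow> V \<subseteq> W"
    using V(2) unfolding kfin_dim_def by blast
  define P0 where "P0 = (\<lambda>x. x 0) ` B0"
  have fP0: "finite P0" using B0 by (simp add: P0_def)
  define W where "W = {x \<in> kspace k. x 0 \<in> span P0}"
  have kres: "restrict f {..<k} \<in> kspace k" for f :: "nat \<Rightarrow> 'a"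
    by (simp add: kspace_def)
  have "ksubspace k W"
    unfolding ksubspace_def W_def
    using k0 kres
    by (auto simp: kzero_def kadd_def kscale_def span_zero span_add span_mul)
  moreover have "B0 \<subseteq> W" using B0 by (auto simp: W_def P0_def span_base)
  ultimately have VW: "V \<subseteq> W" by (rule Bmin)
  define S where "S = (\<lambda>v. a 0 + v) ` span P0"
  have fdS: "fin_dim_affine S"
    unfolding fin_dim_affine_def S_def using fP0 by blast
  have "closed S" unfolding S_def
    using closed_translation[OF closed_span_finite_inner[OF fP0]] by simp
  then have Ssets: "S \<in> sets Q" using borel by auto
  have S0: "emeasure Q S = 0" using null[OF fdS] .
  define X where "X = (\<lambda>i::nat. if i = 0 then S else UNIV)"
  have AX: "A \<subseteq> PiE {..<k} X"
  proof
    fix x assume "x \<in> A"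
    then obtain v where v: "v \<in> V" and x: "x = kadd k a v" using AV by blast
    have "v 0 \<in> span P0" using v VW by (auto simp: W_def)
    then have "x 0 \<in> S" using k0 by (auto simp: x kadd_def S_def)
    then show "x \<in> PiE {..<k} X" by (auto simp: x kadd_def X_def)
  qed
  interpret Qs: sigma_finite_measure Q by (rule sfin)
  interpret product_sigma_finite "\<lambda>_. Q" by unfold_locales
  have Xs: "\<And>i. i \<in> {..<k} \<Longrightarrow> X i \<in> sets Q"
    using Ssets by (auto simp: X_def space[symmetric])
  have "emeasure (PiM {..<k} (\<lambda>_. Q)) (PiE {..<k} X) = (\<Prod>i\<in>{..<k}. emeasure Q (X i))"
    by (rule emeasure_PiM) (auto intro: Xs)
  also have "\<dots> = 0" using k0 S0 by (auto simp: X_def)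
  finally have PX: "emeasure (PiM {..<k} (\<lambda>_. Q)) (PiE {..<k} X) = 0" .
  show "emeasure (PiM {..<k} (\<lambda>_. Q)) A = 0"
  proof (cases "A \<in> sets (PiM {..<k} (\<lambda>_. Q))")
    case True
    have "emeasure (PiM {..<k} (\<lambda>_. Q)) A \<le> emeasure (PiM {..<k} (\<lambda>_. Q)) (PiE {..<k} X)"
      by (rule emeasure_mono[OF AX]) (auto intro: sets_PiM_I_finite Xs)
    then show ?thesis using PX by simp
  next
    case False
    then show ?thesis by (simp add: emeasure_notin_sets)
  qed
qed

end
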